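(* Let $f\colon\mathbb{R}^d\to\mathbb{R}$ be differentiable with $\ell$-Lipschitz continuous gradient, let $g\colon\mathbb{R}^d\to\mathbb{R}$ be continuous and convex, and let $h\colon\mathbb{R}^d\to(-\infty,+\infty]$ be lower semicontinuous. Let $\gamma\in(0,+\infty)$, $\tau\in[0,+\infty)$, $\nu\in(0,2)$, and let $(x_n,y_n,z_n,w_n)$ be a sequence generated by the Backward-Douglas--Rachford algorithm, i.e. starting from $y_0,z_0,w_0\in\mathbb{R}^d$, for every $n\in\mathbb{N}$, \begin{align*} x_{n+1} &\in \operatorname{argmin}_{x\in\mathbb{R}^d}\Big(f(x)+\tfrac{1}{2\gamma}\|x-y_n\|^2\Big),\\ w_{n+1} &\in \operatorname{argmin}_{w\in\mathbb{R}^d}\Big(g^*(w)-\langle w,z_n\rangle+\tfrac{\tau}{2}\|w-w_n\|^2\Big),\\ z_{n+1} &\in \operatorname{argmin}_{z\in\mathbb{R}^d}\Big(h(z)+\tfrac{1}{2\gamma}\|z-(2x_{n+1}-y_n+\gamma w_{n+1})\|^2\Big),\\ y_{n+1} &= y_n+\nu(z_{n+1}-x_{n+1}). \end{align*} Then for all $n\in\mathbb{N}$: (i) $y_n=x_{n+1}+\gamma\nabla f(x_{n+1})$; (ii) $z_n\in\partial g^*(w_{n+1})+\tau(w_{n+1}-w_n)$; (iii) $w_{n+1}\in\partial h(z_{n+1})-\frac{1}{\gamma}(x_{n+1}-z_{n+1})-\frac{1}{\gamma}(x_{n+1}-y_n)$; (iv) $\|y_{n+1}-y_n\|\le(1+\gamma\ell)\|x_{n+2}-x_{n+1}\|$;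 (v) $\|z_{n+2}-z_{n+1}\|\le\frac{1+\gamma\ell}{\nu}\|x_{n+3}-x_{n+2}\|+\left(1+\frac{1+\gamma\ell}{\nu}\right)\|x_{n+2}-x_{n+1}\|$.
   Context: $\|\cdot\|$ and $\langle\cdot,\cdot\rangle$ are the Euclidean norm and inner product on $\mathbb{R}^d$. $g^*(v)=\sup_{x\in\mathbb{R}^d}(\langle v,x\rangle-g(x))$ is the Fenchel conjugate. For a function $\phi$ and $x$ with $|\phi(x)|<\infty$, the regular subdifferential is $\widehat\partial\phi(x)=\{x^*:\liminf_{y\to x}\frac{\phi(y)-\phi(x)-\langle x^*,y-x\rangle}{\|y-x\|}\ge0\}$ and the limiting subdifferential $\partial\phi(x)$ is the set of $x^*$ for which there exist $x_k\to x$ with $\phi(x_k)\to\phi(x)$ and $x_k^*\in\widehat\partial\phi(x_k)$ with $x_k^*\to x^*$ (empty if $|\phi(x)|=\infty$); for convex functions it coincides with the convex subdifferential. Set sums like $A+v$ are Minkowski sums. *)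

theory Defs
  imports "HOL-Analysis.Analysis"
begin

definition fenchel_conj :: "('a::real_inner \<Rightarrow> real) \<Rightarrow> 'a \<Rightarrow> ereal" where
  "fenchel_conj g v = (SUP x. ereal (inner v x - g x))"

definition argmin_set :: "('a \<Rightarrow> 'b::linorder) \<Rightarrow> 'a set" where
  "argmin_set \<phi> = {x. \<forall>y. \<phi> x \<le> \<phi> y}"

definition lsc :: "('a::topological_space \<Rightarrow> ereal) \<Rightarrow> bool" where
  "lsc \<phi> \<longleftrightarrow> (\<forall>x. \<phi> x \<le> Liminf (at x) \<phi>)"

definition reg_subdiff :: "('a::euclidean_space \<Rightarrow> ereal) \<Rightarrow> 'a \<Rightarrow> 'a set" where
  "reg_subdiff \<phi> x =
     (if \<bar>\<phi> x\<bar> < \<infinity> then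
        {s. Liminf (at x) (\<lambda>y. (\<phi> y - \<phi> x - ereal (inner s (y - x))) / ereal (norm (y - x))) \<ge> 0}
      else {})"

definition lim_subdiff :: "('a::euclidean_space \<Rightarrow> ereal) \<Rightarrow> 'a \<Rightarrow> 'a set" where
  "lim_subdiff \<phi> x =
     (if \<bar>\<phi> x\<bar> < \<infinity> then
        {s. \<exists>xs ss. xs \<longlonglongrightarrow> x \<and> (\<lambda>k. \<phi> (xs k)) \<longlonglongrightarrow> \<phi> x
               \<and> (\<forall>k. ss k \<in> reg_subdiff \<phi> (xs k)) \<and> ss \<longlonglongrightarrow> s}
      else {})"

end

theory Submission
  imports Defs
begin



lemma affine_minorant:
  fixes g :: "'a::euclidean_space \<Rightarrow> real"
  assumes "continuous_on UNIV g" "convex_on UNIV g"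
  shows "\<exists>v c. \<forall>x. inner v x - g x \<le> c"
proof -
  let ?S = "epigraph UNIV g"
  have cv: "convex ?S" using assms(2) by (rule convex_epigraphI)
  have S: "?S = {p. g (fst p) \<le> snd p}" by (auto simp: epigraph_def)
  have cl: "closed ?S" unfolding S
    by (intro closed_Collect_le continuous_on_compose2[OF assms(1)] continuous_intros) auto
  have nz: "(0, g 0 - 1) \<notin> ?S" by (auto simp: epigraph_def)
  obtain a b where ab: "inner a (0::'a, g 0 - 1) < b" "\<forall>p\<in>?S. inner a p > b"
    using separating_hyperplane_closed_point[OF cv cl nz] by blast
  obtain a1 a2 where a: "a = (a1, a2)" by (cases a)
  have lb: "inner a1 x + a2 * t > b" if "g x \<le> t" for x t
    using ab(2) that by (auto simp: epigraph_def a inner_Pair)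
  have b0: "a2 * (g 0 - 1) < b" using ab(1) by (simp add: a inner_Pair)
  have a2: "a2 > 0"
  proof (rule ccontr)
    assume "\<not> a2 > 0"
    hence "a2 \<le> 0" by simp
    have "a2 * (g 0) > b" using lb[of 0 "g 0"] by simp
    with b0 have "a2 * g 0 > a2 * (g 0 - 1)" by linarith
    thus False using \<open>a2 \<le> 0\<close> by (simp add: algebra_simps)
  qed
  have "inner (- a1 /\<^sub>R a2) x - g x \<le> - b / a2" for x
  proof -
    have "inner a1 x + a2 * g x > b" using lb[of x "g x"] by simp
    hence "(inner a1 x + a2 * g x) / a2 > b / a2" using a2 by (simp add: divide_strict_right_mono)
    hence "inner a1 x / a2 + g x > b / a2" using a2 by (simp add: add_divide_distrib)
    moreover have "inner (- a1 /\<^sub>R a2) x = - (inner a1 x / a2)" by (simp add: divide_inverse mult.commute)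
    ultimately show ?thesis by linarith
  qed
  thus ?thesis by blast
qed



lemma fermat_reg:
  fixes \<phi> :: "'a::euclidean_space \<Rightarrow> ereal" and q :: "'a \<Rightarrow> real"
  assumes fin: "\<bar>\<phi> u\<bar> < \<infinity>" and dq: "(q has_derivative (\<lambda>h. inner d h)) (at u)"
    and mn: "\<And>v. \<phi> u + ereal (q u) \<le> \<phi> v + ereal (q v)"
  shows "- d \<in> reg_subdiff \<phi> u"
proof -
  obtain c where c: "\<phi> u = ereal c" using fin by (cases "\<phi> u") auto
  define R where "R v = (1 / norm (v - u)) *\<^sub>R (q v - (q u + inner d (v - u)))" for v
  have "(R \<longlongrightarrow> 0) (at u)" using dq unfolding has_derivative_within R_def by simp
  hence "((\<lambda>v. ereal (- R v)) \<longlongrightarrow> ereal (- 0)) (at u)"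
    by (intro tendsto_ereal tendsto_minus)
  hence L0: "Liminf (at u) (\<lambda>v. ereal (- R v)) = 0"
    by (intro lim_imp_Liminf) (auto simp: zero_ereal_def)
  have pt: "ereal (- R v) \<le> (\<phi> v - \<phi> u - ereal (inner (- d) (v - u))) / ereal (norm (v - u))"
    if "v \<noteq> u" for v
  proof -
    have n: "norm (v - u) > 0" using that by simp
    show ?thesis
    proof (cases "\<phi> v")
      case PInf
      then show ?thesis using n c by simp
    next
      case MInf
      then show ?thesis using mn[of v] c by simp
    next
      case (real a)
      have "c + q u \<le> a + q v" using mn[of v] c real by simp
      hence "- (q v - (q u + inner d (v - u))) \<le> a - c + inner d (v - u)" by simp
      hence "- (q v - (q u + inner d (v - u))) / norm (v - u) \<le> (a - c + inner d (v - u)) / norm (v - u)"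
        using n by (simp add: divide_right_mono)
      moreover have "- R v = - (q v - (q u + inner d (v - u))) / norm (v - u)" by (simp add: R_def minus_divide_left)
      ultimately show ?thesis using real c n by simp
    qed
  qed
  have ev: "eventually (\<lambda>v. ereal (- R v) \<le> (\<phi> v - \<phi> u - ereal (inner (- d) (v - u))) / ereal (norm (v - u))) (at u)"
    unfolding eventually_at_filter using pt by (auto intro: always_eventually)
  have "0 \<le> Liminf (at u) (\<lambda>v. (\<phi> v - \<phi> u - ereal (inner (- d) (v - u))) / ereal (norm (v - u)))"
    using Liminf_mono[OF ev] L0 by simp
  thus ?thesis using fin unfolding reg_subdiff_def by simp
qed

lemma reg_lim:
  assumes "s \<in> reg_subdiff \<phi> u" shows "s \<in> lim_subdiff \<phi> u"
proof -
  have "\<bar>\<phi> u\<bar> < \<infinity>" using assms unfolding reg_subdiff_def by (auto split: if_splits)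
  moreover have "\<exists>xs ss. xs \<longlonglongrightarrow> u \<and> (\<lambda>k. \<phi> (xs k)) \<longlonglongrightarrow> \<phi> u
               \<and> (\<forall>k. ss k \<in> reg_subdiff \<phi> (xs k)) \<and> ss \<longlonglongrightarrow> s"
    by (rule exI[of _ "\<lambda>_. u"], rule exI[of _ "\<lambda>_. s"]) (use assms in auto)
  ultimately show ?thesis unfolding lim_subdiff_def by simp
qed



lemma dnorm: "((\<lambda>v. k * (norm (v - p))\<^sup>2) has_derivative (\<lambda>h. inner ((2*k) *\<^sub>R (u - p)) h)) (at u)"
proof -
  have "((\<lambda>v. k * inner (v - p) (v - p)) has_derivative (\<lambda>h. k * (inner h (u - p) + inner (u - p) h))) (at u)"
    by (auto intro!: derivative_eq_intros)
  moreover have "(\<lambda>h. k * (inner h (u - p) + inner (u - p) h)) = (\<lambda>h. inner ((2*k) *\<^sub>R (u - p)) h)"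
    by (auto simp: inner_commute algebra_simps)
  ultimately show ?thesis by (simp add: power2_norm_eq_inner)
qed

lemma ereal_rw: "(x::ereal) - ereal a + ereal b = x + ereal (b - a)"
  by (cases x) auto

theorem lemma3p4:
  fixes f g :: "'a::euclidean_space \<Rightarrow> real"
    and gf :: "'a \<Rightarrow> 'a"
    and h :: "'a \<Rightarrow> ereal"
    and L \<gamma> \<tau> \<nu> :: real
    and x y z w :: "nat \<Rightarrow> 'a"
  assumes grad: "\<And>u. GDERIV f u :> gf u"
    and lip: "L-lipschitz_on UNIV gf"
    and g_cont: "continuous_on UNIV g"
    and g_conv: "convex_on UNIV g"
    and h_lsc: "lsc h"
    and h_range: "\<And>u. h u \<noteq> -\<infinity>"
    and h_proper: "\<exists>u. h u \<noteq> \<infinity>"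
    and gamma: "\<gamma> > 0" and tau: "\<tau> \<ge> 0" and nu: "0 < \<nu>" "\<nu> < 2"
    and x_step: "\<And>n. x (Suc n) \<in> argmin_set
                   (\<lambda>u. f u + 1 / (2 * \<gamma>) * (norm (u - y n))\<^sup>2)"
    and w_step: "\<And>n. w (Suc n) \<in> argmin_set
                   (\<lambda>u. fenchel_conj g u - ereal (inner u (z n))
                        + ereal (\<tau> / 2 * (norm (u - w n))\<^sup>2))"
    and z_step: "\<And>n. z (Suc n) \<in> argmin_set
                   (\<lambda>u. h u + ereal (1 / (2 * \<gamma>) *
                        (norm (u - (2 *\<^sub>R x (Suc n) - y n + \<gamma> *\<^sub>R w (Suc n))))\<^sup>2))"
    and y_step: "\<And>n. y (Suc n) = y n + \<nu> *\<^sub>R (z (Suc n) - x (Suc n))"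
  shows "\<forall>n.
     y n = x (Suc n) + \<gamma> *\<^sub>R gf (x (Suc n))
   \<and> z n \<in> (\<lambda>a. a + \<tau> *\<^sub>R (w (Suc n) - w n)) ` lim_subdiff (fenchel_conj g) (w (Suc n))
   \<and> w (Suc n) \<in> (\<lambda>a. a - (1 / \<gamma>) *\<^sub>R (x (Suc n) - z (Suc n)) - (1 / \<gamma>) *\<^sub>R (x (Suc n) - y n))
                    ` lim_subdiff h (z (Suc n))
   \<and> norm (y (Suc n) - y n) \<le> (1 + \<gamma> * L) * norm (x (n + 2) - x (Suc n))
   \<and> norm (z (n + 2) - z (Suc n)) \<le> (1 + \<gamma> * L) / \<nu> * norm (x (n + 3) - x (n + 2))
        + (1 + (1 + \<gamma> * L) / \<nu>) * norm (x (n + 2) - x (Suc n))"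
  proof -
  have Lnn: "L \<ge> 0" using lip by (rule lipschitz_on_nonneg)
  have gfl: "norm (gf a - gf b) \<le> L * norm (a - b)" for a b
    using lipschitz_onD[OF lip, of a b] by (simp add: dist_norm)
  have i: "y n = x (Suc n) + \<gamma> *\<^sub>R gf (x (Suc n))" for n
  proof -
    let ?u = "x (Suc n)"
    let ?F = "\<lambda>v. f v + 1 / (2 * \<gamma>) * (norm (v - y n))\<^sup>2"
    have d: "(?F has_derivative (\<lambda>h. inner h (gf ?u) + inner ((2 * (1 / (2 * \<gamma>))) *\<^sub>R (?u - y n)) h)) (at ?u)"
      using grad[of ?u] dnorm[of "1 / (2 * \<gamma>)" "y n" ?u] unfolding gderiv_def
      by (intro has_derivative_add) auto
    have "\<forall>v\<in>UNIV. ?F ?u \<le> ?F v" using x_step[of n] by (auto simp: argmin_set_def)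
    from differential_zero_maxmin[OF _ _ d] this
    have z: "(\<lambda>h. inner h (gf ?u) + inner ((2 * (1 / (2 * \<gamma>))) *\<^sub>R (?u - y n)) h) = (\<lambda>v. 0)" by auto
    define e where "e = gf ?u + (1 / \<gamma>) *\<^sub>R (?u - y n)"
    have "inner e e = 0" using fun_cong[OF z, of e] gamma unfolding e_def
      by (simp add: inner_commute inner_add_left inner_add_right)
    hence "e = 0" by simp
    hence "\<gamma> *\<^sub>R e = 0" by simp
    hence "\<gamma> *\<^sub>R gf ?u + (?u - y n) = 0" using gamma unfolding e_def by (simp add: algebra_simps)
    thus ?thesis by (simp add: algebra_simps)
  qed
  obtain v0 c0 where vc: "\<And>t. inner v0 t - g t \<le> c0" using affine_minorant[OF g_cont g_conv] by blast
  have gfin_up: "fenchel_conj g v0 \<le> ereal c0" unfolding fenchel_conj_def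
    by (rule SUP_least) (use vc in auto)
  have gfin_lo: "fenchel_conj g v \<ge> ereal (inner v 0 - g 0)" for v unfolding fenchel_conj_def
    by (rule SUP_upper) auto
  have ii: "z n \<in> (\<lambda>a. a + \<tau> *\<^sub>R (w (Suc n) - w n)) ` lim_subdiff (fenchel_conj g) (w (Suc n))" for n
  proof -
    let ?u = "w (Suc n)"
    define q where "q v = - inner v (z n) + \<tau> / 2 * (norm (v - w n))\<^sup>2" for v
    have mn: "fenchel_conj g ?u + ereal (q ?u) \<le> fenchel_conj g v + ereal (q v)" for v
      using w_step[of n] unfolding argmin_set_def q_def by (simp add: ereal_rw)
    have "fenchel_conj g ?u \<noteq> \<infinity>"
    proof
      assume "fenchel_conj g ?u = \<infinity>"
      hence "fenchel_conj g v0 + ereal (q v0) = \<infinity>" using mn[of v0] by simp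
      thus False using gfin_up by auto
    qed
    moreover have "fenchel_conj g ?u \<noteq> - \<infinity>" using gfin_lo[of ?u] by auto
    ultimately have fin: "\<bar>fenchel_conj g ?u\<bar> < \<infinity>" by auto
    have dq: "(q has_derivative (\<lambda>h. inner (- z n + (2 * (\<tau> / 2)) *\<^sub>R (?u - w n)) h)) (at ?u)"
    proof -
      have "(q has_derivative (\<lambda>h. - inner h (z n) + inner ((2 * (\<tau> / 2)) *\<^sub>R (?u - w n)) h)) (at ?u)"
        unfolding q_def[abs_def] using dnorm[of "\<tau> / 2" "w n" ?u]
        by (intro has_derivative_add has_derivative_minus) (auto intro!: derivative_eq_intros)
      moreover have "(\<lambda>h. - inner h (z n) + inner ((2 * (\<tau> / 2)) *\<^sub>R (?u - w n)) h)
          = (\<lambda>h. inner (- z n + (2 * (\<tau> / 2)) *\<^sub>R (?u - w n)) h)"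
        by (auto simp: inner_commute inner_add_left inner_diff_left inner_diff_right algebra_simps)
      ultimately show ?thesis by simp
    qed
    have "- (- z n + (2 * (\<tau> / 2)) *\<^sub>R (?u - w n)) \<in> reg_subdiff (fenchel_conj g) ?u"
      by (rule fermat_reg[OF fin dq mn])
    hence "z n - \<tau> *\<^sub>R (?u - w n) \<in> lim_subdiff (fenchel_conj g) ?u" by (intro reg_lim) simp
    moreover have "z n = (z n - \<tau> *\<^sub>R (?u - w n)) + \<tau> *\<^sub>R (?u - w n)" by simp
    ultimately show ?thesis by (rule rev_image_eqI)
  qed
  have iii: "w (Suc n) \<in> (\<lambda>a. a - (1 / \<gamma>) *\<^sub>R (x (Suc n) - z (Suc n)) - (1 / \<gamma>) *\<^sub>R (x (Suc n) - y n))
                    ` lim_subdiff h (z (Suc n))" for n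
  proof -
    let ?u = "z (Suc n)"
    define p where "p = 2 *\<^sub>R x (Suc n) - y n + \<gamma> *\<^sub>R w (Suc n)"
    define q where "q v = 1 / (2 * \<gamma>) * (norm (v - p))\<^sup>2" for v
    have mn: "h ?u + ereal (q ?u) \<le> h v + ereal (q v)" for v
      using z_step[of n] unfolding argmin_set_def q_def p_def by simp
    obtain u0 where u0: "h u0 \<noteq> \<infinity>" using h_proper by blast
    have "h ?u \<noteq> \<infinity>"
    proof
      assume "h ?u = \<infinity>"
      hence "h u0 + ereal (q u0) = \<infinity>" using mn[of u0] by simp
      thus False using u0 h_range[of u0] by (cases "h u0") auto
    qed
    hence fin: "\<bar>h ?u\<bar> < \<infinity>" using h_range[of ?u] by (cases "h ?u") auto
    have dq: "(q has_derivative (\<lambda>h. inner ((2 * (1 / (2 * \<gamma>))) *\<^sub>R (?u - p)) h)) (at ?u)"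
      unfolding q_def[abs_def] by (rule dnorm)
    have "- ((2 * (1 / (2 * \<gamma>))) *\<^sub>R (?u - p)) \<in> reg_subdiff h ?u"
      by (rule fermat_reg[OF fin dq mn])
    hence A: "- ((1 / \<gamma>) *\<^sub>R (?u - p)) \<in> lim_subdiff h ?u" using gamma by (intro reg_lim) simp
    have "w (Suc n) = - ((1 / \<gamma>) *\<^sub>R (?u - p)) - (1 / \<gamma>) *\<^sub>R (x (Suc n) - z (Suc n)) - (1 / \<gamma>) *\<^sub>R (x (Suc n) - y n)"
      using gamma unfolding p_def by (simp add: algebra_simps flip: scaleR_add_left)
    with A show ?thesis by (rule rev_image_eqI)
  qed
  have dy: "y (Suc n) - y n = (x (n + 2) - x (Suc n)) + \<gamma> *\<^sub>R (gf (x (n + 2)) - gf (x (Suc n)))" for n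
    using i[of n] i[of "Suc n"] by (simp add: algebra_simps)
  have iv: "norm (y (Suc n) - y n) \<le> (1 + \<gamma> * L) * norm (x (n + 2) - x (Suc n))" for n
  proof -
    have "norm (y (Suc n) - y n) \<le> norm (x (n + 2) - x (Suc n)) + \<gamma> * norm (gf (x (n + 2)) - gf (x (Suc n)))"
      unfolding dy using gamma by (metis abs_of_pos norm_scaleR norm_triangle_ineq)
    also have "\<dots> \<le> norm (x (n + 2) - x (Suc n)) + \<gamma> * (L * norm (x (n + 2) - x (Suc n)))"
      using gfl gamma by (intro add_left_mono mult_left_mono) auto
    finally show ?thesis by (simp add: algebra_simps)
  qed
  have zx: "z (Suc n) = x (Suc n) + (1 / \<nu>) *\<^sub>R (y (Suc n) - y n)" for n
  proof -
    have "(1 / \<nu>) *\<^sub>R (y (Suc n) - y n) = z (Suc n) - x (Suc n)" using y_step[of n] nu by simp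
    thus ?thesis by simp
  qed
  have v: "norm (z (n + 2) - z (Suc n)) \<le> (1 + \<gamma> * L) / \<nu> * norm (x (n + 3) - x (n + 2))
        + (1 + (1 + \<gamma> * L) / \<nu>) * norm (x (n + 2) - x (Suc n))" for n
  proof -
    let ?a = "norm (x (n + 3) - x (n + 2))" and ?b = "norm (x (n + 2) - x (Suc n))"
    have e: "z (n + 2) - z (Suc n) = (x (n + 2) - x (Suc n)) + (1 / \<nu>) *\<^sub>R (y (Suc (Suc n)) - y (Suc n)) - (1 / \<nu>) *\<^sub>R (y (Suc n) - y n)"
      using zx[of n] zx[of "Suc n"] by (simp add: algebra_simps)
    have "norm (z (n + 2) - z (Suc n)) \<le> ?b + (1 / \<nu>) * norm (y (Suc (Suc n)) - y (Suc n)) + (1 / \<nu>) * norm (y (Suc n) - y n)"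
      unfolding e using nu by (smt (verit) norm_scaleR norm_triangle_ineq norm_triangle_ineq4 abs_of_pos divide_pos_pos zero_less_one)
    also have "\<dots> \<le> ?b + (1 / \<nu>) * ((1 + \<gamma> * L) * ?a) + (1 / \<nu>) * ((1 + \<gamma> * L) * ?b)"
      using iv[of n] iv[of "Suc n"] nu by (intro add_mono mult_left_mono) (auto simp: numeral_3_eq_3 numeral_2_eq_2)
    also have "\<dots> = (1 + \<gamma> * L) / \<nu> * ?a + (1 + (1 + \<gamma> * L) / \<nu>) * ?b"
      by (simp add: algebra_simps add_divide_distrib)
    finally show ?thesis .
  qed
  show ?thesis using i ii iii iv v by blast
qed

end
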